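(* Every RiFle assignment game (with arbitrary nonnegative real data $(\beta_{ij},\gamma_{ij})$ and an arbitrary assignment of each agent as rigid or flexible) has at least one stable outcome; i.e. the set of stable outcomes is nonempty.
   Context: A RiFle assignment game consists of two disjoint sets of agents $P=\{p_1,\dots,p_n\}$ and $Q=\{q_1,\dots,q_n\}$, a pair of nonnegative real numbers $(\beta_{ij},\gamma_{ij})$ for every pair $(p_i,q_j)\in P\times Q$ (write $\alpha_{ij}=\beta_{ij}+\gamma_{ij}$), and a designation of every agent as either rigid or flexible. Let $\mathcal R$ be the set of pairs $(p_i,q_j)$ in which at least one of $p_i,q_j$ is rigid, and $\mathcal F$ the set of pairs in which both are flexible. An outcome $(\bar u,\bar v;\mu)$ consists of a matching $\mu$ between $P$ and $Q$ (a set of disjoint pairs $(p_i,q_j)$; write $p_i\stackrel{\mu}{\longleftrightarrow} q_j$) and payoff vectors $\bar u=(u_1,\dots,u_n)$, $\bar v=(v_1,\dots,v_n)\in\mathbb R^n$. It is feasible if: (1) $u_i\ge 0$, $v_j\ge 0$ for all $i,j$; (2) if a rigid agent $p_i$ is matched to $q_j$ then $u_i=\beta_{ij}$, and if moreover $q_j$ is flexible then $v_j\ge\gamma_{ij}$; symmetrically, if a rigid agent $q_j$ is matched to $p_i$ then $v_j=\gamma_{ij}$, and if moreover $p_i$ is flexible then $u_i\ge\beta_{ij}$; (3) $\sum_i u_i+\sum_j v_j=\sum_{p_i\stackrel{\mu}{\longleftrightarrow} q_j}\alpha_{ij}$. It is stable if it is feasible and $u_i+v_j\ge\alpha_{ij}$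 for all $(p_i,q_j)\in\mathcal F$, and ($u_i\ge\beta_{ij}$ or $v_j\ge\gamma_{ij}$) for all $(p_i,q_j)\in\mathcal R$. *)

theory Defs
  imports Complex_Main
begin

text \<open>A RiFle assignment game with n agents on each side P = {p_0..p_{n-1}},
  Q = {q_0..q_{n-1}} (indexed by {..<n}); data beta i j, gamma i j for the pair
  (p_i,q_j); rigidP i / rigidQ j designate p_i / q_j as rigid (otherwise flexible).
  Payoff vectors u, v are functions nat => real, of which only the values on
  {..<n} are relevant.\<close>

definition alpha :: "(nat \<Rightarrow> nat \<Rightarrow> real) \<Rightarrow> (nat \<Rightarrow> nat \<Rightarrow> real) \<Rightarrow> nat \<Rightarrow> nat \<Rightarrow> real" where
  "alpha beta gamma i j = beta i j + gamma i j"

definition is_matching :: "nat \<Rightarrow> (nat \<times> nat) set \<Rightarrow> bool" where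
  "is_matching n \<mu> \<longleftrightarrow> \<mu> \<subseteq> {..<n} \<times> {..<n}
     \<and> (\<forall>i j j'. (i, j) \<in> \<mu> \<longrightarrow> (i, j') \<in> \<mu> \<longrightarrow> j = j')
     \<and> (\<forall>i i' j. (i, j) \<in> \<mu> \<longrightarrow> (i', j) \<in> \<mu> \<longrightarrow> i = i')"

definition in_R :: "(nat \<Rightarrow> bool) \<Rightarrow> (nat \<Rightarrow> bool) \<Rightarrow> nat \<Rightarrow> nat \<Rightarrow> bool" where
  "in_R rigidP rigidQ i j \<longleftrightarrow> rigidP i \<or> rigidQ j"

definition in_F :: "(nat \<Rightarrow> bool) \<Rightarrow> (nat \<Rightarrow> bool) \<Rightarrow> nat \<Rightarrow> nat \<Rightarrow> bool" where
  "in_F rigidP rigidQ i j \<longleftrightarrow> \<not> rigidP i \<and> \<not> rigidQ j"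

definition feasible_outcome ::
  "nat \<Rightarrow> (nat \<Rightarrow> nat \<Rightarrow> real) \<Rightarrow> (nat \<Rightarrow> nat \<Rightarrow> real) \<Rightarrow> (nat \<Rightarrow> bool) \<Rightarrow> (nat \<Rightarrow> bool)
   \<Rightarrow> (nat \<Rightarrow> real) \<Rightarrow> (nat \<Rightarrow> real) \<Rightarrow> (nat \<times> nat) set \<Rightarrow> bool" where
  "feasible_outcome n beta gamma rigidP rigidQ u v \<mu> \<longleftrightarrow>
     is_matching n \<mu>
   \<and> (\<forall>i<n. u i \<ge> 0) \<and> (\<forall>j<n. v j \<ge> 0)
   \<and> (\<forall>(i, j) \<in> \<mu>. rigidP i \<longrightarrow> u i = beta i j \<and> (\<not> rigidQ j \<longrightarrow> v j \<ge> gamma i j))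
   \<and> (\<forall>(i, j) \<in> \<mu>. rigidQ j \<longrightarrow> v j = gamma i j \<and> (\<not> rigidP i \<longrightarrow> u i \<ge> beta i j))
   \<and> (\<Sum>i<n. u i) + (\<Sum>j<n. v j) = (\<Sum>(i, j) \<in> \<mu>. alpha beta gamma i j)"

definition stable_outcome ::
  "nat \<Rightarrow> (nat \<Rightarrow> nat \<Rightarrow> real) \<Rightarrow> (nat \<Rightarrow> nat \<Rightarrow> real) \<Rightarrow> (nat \<Rightarrow> bool) \<Rightarrow> (nat \<Rightarrow> bool)
   \<Rightarrow> (nat \<Rightarrow> real) \<Rightarrow> (nat \<Rightarrow> real) \<Rightarrow> (nat \<times> nat) set \<Rightarrow> bool" where
  "stable_outcome n beta gamma rigidP rigidQ u v \<mu> \<longleftrightarrow>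
     feasible_outcome n beta gamma rigidP rigidQ u v \<mu>
   \<and> (\<forall>i<n. \<forall>j<n. in_F rigidP rigidQ i j \<longrightarrow> u i + v j \<ge> alpha beta gamma i j)
   \<and> (\<forall>i<n. \<forall>j<n. in_R rigidP rigidQ i j \<longrightarrow> u i \<ge> beta i j \<or> v j \<ge> gamma i j)"

end

theory Submission
  imports Defs "HOL-Library.Product_Lexorder" "HOL-Library.Infinite_Set"
begin

definition CH :: "('c \<Rightarrow> nat) \<Rightarrow> ('c \<Rightarrow> 'k::linorder) \<Rightarrow> 'c set \<Rightarrow> 'c set" where
  "CH pa kp A = {x\<in>A. \<forall>y\<in>A. pa y = pa x \<longrightarrow> kp y \<le> kp x}"

lemma CH_sub: "CH pa kp A \<subseteq> A" by (auto simp: CH_def)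

lemma RH_mono: assumes AB: "A \<subseteq> B" shows "A - CH pa kp A \<subseteq> B - CH pa kp B"
proof
  fix x assume x: "x \<in> A - CH pa kp A"
  then have xA: "x \<in> A" unfolding CH_def by blast
  from x obtain y where y: "y \<in> A" "pa y = pa x" "\<not> kp y \<le> kp x" unfolding CH_def by blast
  have "x \<notin> CH pa kp B" using y AB unfolding CH_def by blast
  then show "x \<in> B - CH pa kp B" using xA AB by blast
qed

lemma CH_uniq: "inj_on kp X \<Longrightarrow> A \<subseteq> X \<Longrightarrow> x \<in> CH pa kp A \<Longrightarrow> y \<in> CH pa kp A \<Longrightarrow> pa x = pa y \<Longrightarrow> x = y"
proof -
  assume ij: "inj_on kp X" and AX: "A \<subseteq> X" and x: "x \<in> CH pa kp A" and y: "y \<in> CH pa kp A" and p: "pa x = pa y"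
  have xy: "x \<in> A" "y \<in> A" using x y unfolding CH_def by blast+
  have "kp y \<le> kp x" using x xy p unfolding CH_def by auto
  moreover have "kp x \<le> kp y" using y xy p unfolding CH_def by auto
  ultimately have "kp x = kp y" by simp
  then show "x = y" using ij xy AX by (meson inj_onD subsetD)
qed

lemma CH_ex: assumes "finite A" "x \<in> A" shows "\<exists>z\<in>CH pa kp A. pa z = pa x \<and> kp x \<le> kp z"
proof -
  let ?S = "{y\<in>A. pa y = pa x}"
  have fin: "finite (kp ` ?S)" using assms by auto
  have ne: "kp ` ?S \<noteq> {}" using assms by auto
  obtain z where z: "z \<in> ?S" "kp z = Max (kp ` ?S)" using Max_in[OF fin ne] by auto
  have "\<forall>y\<in>?S. kp y \<le> kp z" using z fin by auto
  then have "z \<in> CH pa kp A" using z by (auto simp: CH_def)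
  moreover have "kp x \<le> kp z" using z fin assms by auto
  ultimately show ?thesis using z by auto
qed

lemma gs_exists:
  fixes X :: "'c set" and pa qa :: "'c \<Rightarrow> nat" and kp :: "'c \<Rightarrow> 'k::linorder" and kq :: "'c \<Rightarrow> 'l::linorder"
  assumes fin: "finite X" and ip: "inj_on kp X" and iq: "inj_on kq X"
  shows "\<exists>Y\<subseteq>X. (\<forall>x\<in>Y. \<forall>y\<in>Y. pa x = pa y \<longrightarrow> x = y) \<and> (\<forall>x\<in>Y. \<forall>y\<in>Y. qa x = qa y \<longrightarrow> x = y)
     \<and> (\<forall>x\<in>X-Y. (\<exists>y\<in>Y. pa y = pa x \<and> kp x < kp y) \<or> (\<exists>y\<in>Y. qa y = qa x \<and> kq x < kq y))"
proof -
  define F where "F = (\<lambda>A. X - (let B = X - (A - CH pa kp A) in B - CH qa kq B))"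
  have mono: "mono F"
  proof (rule monoI)
    fix A B :: "'c set" assume "A \<subseteq> B"
    then have "A - CH pa kp A \<subseteq> B - CH pa kp B" by (rule RH_mono)
    then have "X - (B - CH pa kp B) \<subseteq> X - (A - CH pa kp A)" by auto
    then have "(X - (B - CH pa kp B)) - CH qa kq (X - (B - CH pa kp B)) \<subseteq> (X - (A - CH pa kp A)) - CH qa kq (X - (A - CH pa kp A))"
      by (rule RH_mono)
    then show "F A \<subseteq> F B" unfolding F_def Let_def by blast
  qed
  define X1 where "X1 = lfp F"
  have fp: "X1 = F X1" unfolding X1_def using lfp_unfold[OF mono] .
  define X2 where "X2 = X - (X1 - CH pa kp X1)"
  have X1: "X1 = X - (X2 - CH qa kq X2)" using fp unfolding F_def X2_def Let_def by simp
  have X1s: "X1 \<subseteq> X" using X1 by auto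
  have X2s: "X2 \<subseteq> X" unfolding X2_def by auto
  define Y where "Y = X1 \<inter> X2"
  have Y1: "Y = CH pa kp X1" using X1s CH_sub[of pa kp X1] unfolding Y_def X2_def by auto
  have Y2: "Y = CH qa kq X2" using X2s CH_sub[of qa kq X2] X1 unfolding Y_def by auto
  have fin1: "finite X1" "finite X2" using X1s X2s fin finite_subset by auto
  show ?thesis
  proof (intro exI[of _ Y] conjI ballI impI)
    show "Y \<subseteq> X" using X1s Y_def by auto
  next
    fix x y assume "x \<in> Y" "y \<in> Y" "pa x = pa y" then show "x = y"
      using CH_uniq[OF ip X1s] Y1 by auto
  next
    fix x y assume "x \<in> Y" "y \<in> Y" "qa x = qa y" then show "x = y"
      using CH_uniq[OF iq X2s] Y2 by auto
  next
    fix x assume x: "x \<in> X - Y"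
    show "(\<exists>y\<in>Y. pa y = pa x \<and> kp x < kp y) \<or> (\<exists>y\<in>Y. qa y = qa x \<and> kq x < kq y)"
    proof (cases "x \<in> X1")
      case True
      obtain z where z: "z \<in> CH pa kp X1" "pa z = pa x" "kp x \<le> kp z" using CH_ex[OF fin1(1) True] by auto
      have "z \<noteq> x" using z x Y1 by auto
      then have "kp x < kp z" using z ip X1s True CH_sub[of pa kp X1] unfolding inj_on_def
        by (metis le_neq_trans subsetD)
      then show ?thesis using z Y1 by auto
    next
      case False
      then have xin: "x \<in> X2 - CH qa kq X2" using X1 x by auto
      then obtain y where y: "y \<in> X2" "qa y = qa x" "kq x < kq y" unfolding CH_def by auto
      obtain z where z: "z \<in> CH qa kq X2" "qa z = qa y" "kq y \<le> kq z" using CH_ex[OF fin1(2) y(1)] by auto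
      then show ?thesis using y Y2 by force
    qed
  qed
qed


lemma floor_mult_le: assumes "(e::real) > 0" "a \<ge> 0" "k \<le> nat \<lfloor>a / e\<rfloor>" shows "real k * e \<le> a"
proof -
  have "real k \<le> real (nat \<lfloor>a / e\<rfloor>)" using assms(3) by simp
  also have "\<dots> = of_int \<lfloor>a / e\<rfloor>" using assms by simp
  also have "\<dots> \<le> a / e" by (rule of_int_floor_le)
  finally have "real k \<le> a / e" .
  then show ?thesis using assms by (simp add: pos_le_divide_eq)
qed

lemma nat_floor_bounds: assumes "(z::real) \<ge> 0" shows "real (nat \<lfloor>z\<rfloor>) \<le> z \<and> z < real (nat \<lfloor>z\<rfloor>) + 1"
proof -
  have "real (nat \<lfloor>z\<rfloor>) = of_int \<lfloor>z\<rfloor>" using assms by simp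
  moreover have "of_int \<lfloor>z\<rfloor> \<le> z" by (rule of_int_floor_le)
  moreover have "z < of_int \<lfloor>z\<rfloor> + 1" by (rule real_of_int_floor_add_one_gt)
  ultimately show ?thesis by simp
qed

lemma approx_exists:
  fixes n :: nat and beta gamma :: "nat \<Rightarrow> nat \<Rightarrow> real" and rigidP rigidQ :: "nat \<Rightarrow> bool" and e :: real
  assumes nn: "\<forall>i<n. \<forall>j<n. beta i j \<ge> 0 \<and> gamma i j \<ge> 0" and ep: "e > 0"
  shows "\<exists>u v \<mu>. feasible_outcome n beta gamma rigidP rigidQ u v \<mu>
    \<and> (\<forall>i<n. \<forall>j<n. in_R rigidP rigidQ i j \<longrightarrow> u i \<ge> beta i j \<or> v j \<ge> gamma i j)
    \<and> (\<forall>i<n. \<forall>j<n. in_F rigidP rigidQ i j \<longrightarrow> u i + v j \<ge> alpha beta gamma i j - e)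
    \<and> (\<forall>i. 0 \<le> u i \<and> u i \<le> (\<Sum>i<n. \<Sum>j<n. alpha beta gamma i j))
    \<and> (\<forall>j. 0 \<le> v j \<and> v j \<le> (\<Sum>i<n. \<Sum>j<n. alpha beta gamma i j))"
proof -
  define a where "a = alpha beta gamma"
  define B where "B = (\<Sum>i<n. \<Sum>j<n. a i j)"
  define F where "F = in_F rigidP rigidQ"
  define K where "K = (\<lambda>i j. nat \<lfloor>a i j / e\<rfloor>)"
  define X :: "(nat \<times> nat \<times> nat) set" where
    "X = Sigma {..<n} (\<lambda>i. Sigma {..<n} (\<lambda>j. if F i j then {..K i j} else {0}))"
  define UP where "UP = (\<lambda>(i,j,k). if F i j then real k * e else beta i j)"
  define UQ where "UQ = (\<lambda>(i,j,k). if F i j then a i j - real k * e else gamma i j)"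
  define pa :: "nat \<times> nat \<times> nat \<Rightarrow> nat" where "pa = fst"
  define qa :: "nat \<times> nat \<times> nat \<Rightarrow> nat" where "qa = (\<lambda>x. fst (snd x))"
  have ann: "\<And>i j. i < n \<Longrightarrow> j < n \<Longrightarrow> 0 \<le> a i j" using nn by (simp add: a_def alpha_def)
  have finX: "finite X" unfolding X_def by (auto intro!: finite_SigmaI)
  have Xm: "\<And>x. x \<in> X \<Longrightarrow> pa x < n \<and> qa x < n" unfolding X_def pa_def qa_def by auto
  have Xc: "\<And>i j k. (i,j,k) \<in> X \<longleftrightarrow> i < n \<and> j < n \<and> (if F i j then k \<le> K i j else k = 0)"
    unfolding X_def by auto
  have props: "0 \<le> UP x \<and> 0 \<le> UQ x \<and> UP x + UQ x = a (pa x) (qa x) \<and> UP x \<le> a (pa x) (qa x) \<and> UQ x \<le> a (pa x) (qa x)"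
    if "x \<in> X" for x
  proof -
    obtain i j k where x: "x = (i,j,k)" by (cases x) auto
    have ij: "i < n" "j < n" using that x Xc by auto
    show ?thesis
    proof (cases "F i j")
      case True
      then have "k \<le> K i j" using that x Xc by auto
      then have "real k * e \<le> a i j" using floor_mult_le[OF ep ann[OF ij]] K_def by auto
      then show ?thesis using True ep x ann[OF ij] by (simp add: UP_def UQ_def pa_def qa_def)
    next
      case False
      then show ?thesis using nn ij x by (simp add: UP_def UQ_def pa_def qa_def a_def alpha_def)
    qed
  qed
  have ip: "inj_on (\<lambda>x. (UP x, x)) X" by (auto simp: inj_on_def)
  have iq: "inj_on (\<lambda>x. (UQ x, x)) X" by (auto simp: inj_on_def)
  obtain Y where YX: "Y \<subseteq> X" and up: "\<forall>x\<in>Y. \<forall>y\<in>Y. pa x = pa y \<longrightarrow> x = y"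
    and uq: "\<forall>x\<in>Y. \<forall>y\<in>Y. qa x = qa y \<longrightarrow> x = y"
    and st: "\<forall>x\<in>X-Y. (\<exists>y\<in>Y. pa y = pa x \<and> (UP x, x) < (UP y, y)) \<or> (\<exists>y\<in>Y. qa y = qa x \<and> (UQ x, x) < (UQ y, y))"
    using gs_exists[OF finX ip iq, of pa qa] by blast
  have finY: "finite Y" using finX YX finite_subset by auto
  define u where "u = (\<lambda>i. sum UP {x\<in>Y. pa x = i})"
  define v where "v = (\<lambda>j. sum UQ {x\<in>Y. qa x = j})"
  define \<mu> where "\<mu> = (\<lambda>x. (pa x, qa x)) ` Y"
  have uY: "u (pa x) = UP x" if "x \<in> Y" for x
  proof -
    have "{y\<in>Y. pa y = pa x} = {x}" using that up by auto
    then show ?thesis by (simp add: u_def)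
  qed
  have vY: "v (qa x) = UQ x" if "x \<in> Y" for x
  proof -
    have "{y\<in>Y. qa y = qa x} = {x}" using that uq by auto
    then show ?thesis by (simp add: v_def)
  qed
  have unn: "0 \<le> u i" for i unfolding u_def using YX props by (auto intro!: sum_nonneg)
  have vnn: "0 \<le> v i" for i unfolding v_def using YX props by (auto intro!: sum_nonneg)
  have aB: "a i j \<le> B" if "i < n" "j < n" for i j
  proof -
    have "a i j \<le> (\<Sum>j<n. a i j)" using that ann by (intro member_le_sum) auto
    also have "\<dots> \<le> B" unfolding B_def using that ann by (intro member_le_sum[where f = "\<lambda>i. \<Sum>j<n. a i j"] sum_nonneg) auto
    finally show ?thesis .
  qed
  have uB: "u i \<le> B" for i
  proof (cases "\<exists>x\<in>Y. pa x = i")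
    case True
    then obtain x where "x \<in> Y" "pa x = i" by auto
    then have "x \<in> X" "u i = UP x" using uY[of x] YX by auto
    then have "u i \<le> a (pa x) (qa x)" "pa x < n" "qa x < n" using props Xm by auto
    then show ?thesis using aB[of "pa x" "qa x"] by linarith
  next
    case False
    then have "u i = 0" unfolding u_def by (auto intro: sum.neutral)
    moreover have "0 \<le> B" unfolding B_def using ann by (auto intro!: sum_nonneg)
    ultimately show ?thesis by simp
  qed
  have vB: "v i \<le> B" for i
  proof (cases "\<exists>x\<in>Y. qa x = i")
    case True
    then obtain x where "x \<in> Y" "qa x = i" by auto
    then have "x \<in> X" "v i = UQ x" using vY[of x] YX by auto
    then have "v i \<le> a (pa x) (qa x)" "pa x < n" "qa x < n" using props Xm by auto
    then show ?thesis using aB[of "pa x" "qa x"] by linarith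
  next
    case False
    then have "v i = 0" unfolding v_def by (auto intro: sum.neutral)
    moreover have "0 \<le> B" unfolding B_def using ann by (auto intro!: sum_nonneg)
    ultimately show ?thesis by simp
  qed
  have key: "UP x \<le> u (pa x) \<or> UQ x \<le> v (qa x)" if "x \<in> X" for x
  proof (cases "x \<in> Y")
    case True then show ?thesis using uY by simp
  next
    case False
    then have "(\<exists>y\<in>Y. pa y = pa x \<and> (UP x, x) < (UP y, y)) \<or> (\<exists>y\<in>Y. qa y = qa x \<and> (UQ x, x) < (UQ y, y))"
      using st that by auto
    then show ?thesis
    proof
      assume "\<exists>y\<in>Y. pa y = pa x \<and> (UP x, x) < (UP y, y)"
      then obtain y where "y \<in> Y" "pa y = pa x" "(UP x, x) < (UP y, y)" by auto
      then show ?thesis using uY[of y] by (auto simp: less_prod_def')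
    next
      assume "\<exists>y\<in>Y. qa y = qa x \<and> (UQ x, x) < (UQ y, y)"
      then obtain y where "y \<in> Y" "qa y = qa x" "(UQ x, x) < (UQ y, y)" by auto
      then show ?thesis using vY[of y] by (auto simp: less_prod_def')
    qed
  qed
  have matching: "is_matching n \<mu>"
    unfolding is_matching_def
  proof (intro conjI allI impI)
    show "\<mu> \<subseteq> {..<n} \<times> {..<n}" using Xm YX unfolding \<mu>_def by blast
  next
    fix i j j' assume "(i,j) \<in> \<mu>" "(i,j') \<in> \<mu>"
    then obtain x y where "x\<in>Y" "y\<in>Y" "(i,j) = (pa x, qa x)" "(i,j') = (pa y, qa y)"
      unfolding \<mu>_def by blast
    then show "j = j'" using up by auto
  next
    fix i i' j assume "(i,j) \<in> \<mu>" "(i',j) \<in> \<mu>"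
    then obtain x y where "x\<in>Y" "y\<in>Y" "(i,j) = (pa x, qa x)" "(i',j) = (pa y, qa y)"
      unfolding \<mu>_def by blast
    then show "i = i'" using uq by auto
  qed
  have rig: "(\<forall>(i, j) \<in> \<mu>. rigidP i \<longrightarrow> u i = beta i j \<and> (\<not> rigidQ j \<longrightarrow> v j \<ge> gamma i j))
     \<and> (\<forall>(i, j) \<in> \<mu>. rigidQ j \<longrightarrow> v j = gamma i j \<and> (\<not> rigidP i \<longrightarrow> u i \<ge> beta i j))"
  proof -
    have "u i = beta i j \<and> v j = gamma i j" if mu: "(i,j) \<in> \<mu>" and nf: "\<not> F i j" for i j
    proof -
      obtain x where x0: "x \<in> Y" "(i,j) = (pa x, qa x)" using mu unfolding \<mu>_def by blast
      then have x: "x \<in> Y" "pa x = i" "qa x = j" by auto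
      obtain k where "x = (i,j,k)" using x unfolding pa_def qa_def by (cases x) auto
      then show ?thesis using uY[OF x(1)] vY[OF x(1)] x nf by (simp add: UP_def UQ_def)
    qed
    then show ?thesis unfolding F_def in_F_def by auto
  qed
  have sumeq: "(\<Sum>i<n. u i) + (\<Sum>j<n. v j) = (\<Sum>(i, j) \<in> \<mu>. alpha beta gamma i j)"
  proof -
    have s1: "(\<Sum>i<n. u i) = sum UP Y" unfolding u_def
      by (rule sum.group[OF finY]) (use Xm YX in auto)
    have s2: "(\<Sum>j<n. v j) = sum UQ Y" unfolding v_def
      by (rule sum.group[OF finY]) (use Xm YX in auto)
    have inj: "inj_on (\<lambda>x. (pa x, qa x)) Y" using up by (auto simp: inj_on_def)
    have "(\<Sum>(i, j) \<in> \<mu>. alpha beta gamma i j) = (\<Sum>x\<in>Y. a (pa x) (qa x))"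
      unfolding \<mu>_def a_def by (simp add: sum.reindex[OF inj])
    also have "\<dots> = (\<Sum>x\<in>Y. UP x + UQ x)" using props YX by (intro sum.cong) auto
    also have "\<dots> = sum UP Y + sum UQ Y" by (simp add: sum.distrib)
    finally show ?thesis using s1 s2 by simp
  qed
  have feas: "feasible_outcome n beta gamma rigidP rigidQ u v \<mu>"
  proof -
    have c1: "\<forall>i<n. u i \<ge> 0" using unn by blast
    have c2: "\<forall>j<n. v j \<ge> 0" using vnn by blast
    show ?thesis unfolding feasible_outcome_def by (intro conjI matching c1 c2 rig[THEN conjunct1] rig[THEN conjunct2] sumeq)
  qed
  have Rst: "u i \<ge> beta i j \<or> v j \<ge> gamma i j" if "i < n" "j < n" "in_R rigidP rigidQ i j" for i j
  proof -
    have nF: "\<not> F i j" using that(3) unfolding F_def in_F_def in_R_def by auto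
    then have "(i,j,0) \<in> X" using that Xc by auto
    from key[OF this] show ?thesis using nF by (simp add: UP_def UQ_def pa_def qa_def)
  qed
  have Fst: "u i + v j \<ge> a i j - e" if "i < n" "j < n" "F i j" for i j
  proof -
    define k0 where "k0 = nat \<lfloor>u i / e\<rfloor> + 1"
    have ue: "u i / e \<ge> 0" using unn[of i] ep by simp
    have fl: "real (nat \<lfloor>u i / e\<rfloor>) \<le> u i / e" using nat_floor_bounds[OF ue] by simp
    have fl2: "u i / e < real (nat \<lfloor>u i / e\<rfloor>) + 1" using nat_floor_bounds[OF ue] by simp
    have k0r: "real k0 = real (nat \<lfloor>u i / e\<rfloor>) + 1" unfolding k0_def by simp
    have "u i < (real (nat \<lfloor>u i / e\<rfloor>) + 1) * e" using fl2 ep by (simp add: pos_divide_less_eq)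
    then have k0a: "real k0 * e > u i" using k0r by (simp only:)
    have k0b: "real k0 * e \<le> u i + e" using fl ep unfolding k0_def by (simp add: pos_le_divide_eq distrib_right)
    show ?thesis
    proof (cases "k0 \<le> K i j")
      case True
      then have "(i,j,k0) \<in> X" using that Xc by auto
      from key[OF this] have "real k0 * e \<le> u i \<or> a i j - real k0 * e \<le> v j"
        using that(3) by (simp add: UP_def UQ_def pa_def qa_def)
      then show ?thesis using k0a k0b by auto
    next
      case False
      then have "nat \<lfloor>a i j / e\<rfloor> \<le> nat \<lfloor>u i / e\<rfloor>" unfolding K_def k0_def by auto
      moreover have "a i j / e < real (nat \<lfloor>a i j / e\<rfloor>) + 1" using ann[OF that(1,2)] ep
        nat_floor_bounds[of "a i j / e"] by simp
      ultimately have "a i j / e < u i / e + 1" using fl by linarith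
      then have "a i j < u i + e" using ep by (simp add: divide_less_eq distrib_right)
      then show ?thesis using vnn[of j] by auto
    qed
  qed
  have R': "\<forall>i<n. \<forall>j<n. in_R rigidP rigidQ i j \<longrightarrow> u i \<ge> beta i j \<or> v j \<ge> gamma i j"
    using Rst by blast
  have F': "\<forall>i<n. \<forall>j<n. in_F rigidP rigidQ i j \<longrightarrow> u i + v j \<ge> alpha beta gamma i j - e"
    using Fst unfolding F_def a_def by blast
  have B1: "\<forall>i. 0 \<le> u i \<and> u i \<le> (\<Sum>i<n. \<Sum>j<n. alpha beta gamma i j)"
    using unn uB unfolding B_def a_def by blast
  have B2: "\<forall>j. 0 \<le> v j \<and> v j \<le> (\<Sum>i<n. \<Sum>j<n. alpha beta gamma i j)"
    using vnn vB unfolding B_def a_def by blast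
  show ?thesis using feas R' F' B1 B2 by blast
qed



lemma multi_subseq:
  fixes s :: "nat \<Rightarrow> nat \<Rightarrow> real"
  assumes bd: "\<forall>N i. \<bar>s N i\<bar> \<le> B"
  shows "\<exists>r. strict_mono r \<and> (\<forall>i<m. convergent (\<lambda>N. s (r N) i))"
proof (induction m)
  case 0
  show ?case using strict_mono_id by blast
next
  case (Suc m)
  then obtain r where r: "strict_mono r" "\<forall>i<m. convergent (\<lambda>N. s (r N) i)" by blast
  obtain g where g: "strict_mono g" "monoseq (\<lambda>N. s (r (g N)) m)"
    using seq_monosub[of "\<lambda>N. s (r N) m"] by blast
  have "Bseq (\<lambda>N. s (r (g N)) m)" using bd by (intro BseqI'[of _ B]) auto
  then have cm: "convergent (\<lambda>N. s (r (g N)) m)" using g(2) Bseq_monoseq_convergent by blast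
  have "convergent (\<lambda>N. s (r (g N)) i)" if "i < m" for i
    using convergent_subseq_convergent[OF r(2)[rule_format, OF that] g(1)] by (simp add: o_def)
  then have "\<forall>i<Suc m. convergent (\<lambda>N. s ((r \<circ> g) N) i)" using cm less_Suc_eq by auto
  moreover have "strict_mono (r \<circ> g)" using r(1) g(1) by (rule strict_mono_o)
  ultimately show ?case by blast
qed

lemma feas_parts:
  assumes "feasible_outcome n beta gamma rigidP rigidQ u v \<mu>"
  shows "is_matching n \<mu>"
    and "\<forall>(i, j) \<in> \<mu>. rigidP i \<longrightarrow> u i = beta i j \<and> (\<not> rigidQ j \<longrightarrow> v j \<ge> gamma i j)"
    and "\<forall>(i, j) \<in> \<mu>. rigidQ j \<longrightarrow> v j = gamma i j \<and> (\<not> rigidP i \<longrightarrow> u i \<ge> beta i j)"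
    and "(\<Sum>i<n. u i) + (\<Sum>j<n. v j) = (\<Sum>(i, j) \<in> \<mu>. alpha beta gamma i j)"
proof -
  note H = assms[unfolded feasible_outcome_def]
  show "is_matching n \<mu>" using H by (elim conjE)
  show "\<forall>(i, j) \<in> \<mu>. rigidP i \<longrightarrow> u i = beta i j \<and> (\<not> rigidQ j \<longrightarrow> v j \<ge> gamma i j)" using H by (elim conjE)
  show "\<forall>(i, j) \<in> \<mu>. rigidQ j \<longrightarrow> v j = gamma i j \<and> (\<not> rigidP i \<longrightarrow> u i \<ge> beta i j)" using H by (elim conjE)
  show "(\<Sum>i<n. u i) + (\<Sum>j<n. v j) = (\<Sum>(i, j) \<in> \<mu>. alpha beta gamma i j)" using H by (elim conjE)
qed

theorem theorem1:
  fixes n :: nat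
    and beta gamma :: "nat \<Rightarrow> nat \<Rightarrow> real"
    and rigidP rigidQ :: "nat \<Rightarrow> bool"
  assumes "\<forall>i<n. \<forall>j<n. beta i j \<ge> 0 \<and> gamma i j \<ge> 0"
  shows "\<exists>u v \<mu>. stable_outcome n beta gamma rigidP rigidQ u v \<mu>"
proof -
  define B where "B = (\<Sum>i<n. \<Sum>j<n. alpha beta gamma i j)"
  have ex: "\<forall>N. \<exists>t. feasible_outcome n beta gamma rigidP rigidQ (fst t) (fst (snd t)) (snd (snd t))
    \<and> (\<forall>i<n. \<forall>j<n. in_R rigidP rigidQ i j \<longrightarrow> fst t i \<ge> beta i j \<or> fst (snd t) j \<ge> gamma i j)
    \<and> (\<forall>i<n. \<forall>j<n. in_F rigidP rigidQ i j \<longrightarrow> fst t i + fst (snd t) j \<ge> alpha beta gamma i j - inverse (real (Suc N)))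
    \<and> (\<forall>i. 0 \<le> fst t i \<and> fst t i \<le> B) \<and> (\<forall>j. 0 \<le> fst (snd t) j \<and> fst (snd t) j \<le> B)"
  proof
    fix N
    have "inverse (real (Suc N)) > (0::real)" by simp
    from approx_exists[OF assms this, of rigidP rigidQ] obtain u v \<mu> where
      "feasible_outcome n beta gamma rigidP rigidQ u v \<mu>
    \<and> (\<forall>i<n. \<forall>j<n. in_R rigidP rigidQ i j \<longrightarrow> u i \<ge> beta i j \<or> v j \<ge> gamma i j)
    \<and> (\<forall>i<n. \<forall>j<n. in_F rigidP rigidQ i j \<longrightarrow> u i + v j \<ge> alpha beta gamma i j - inverse (real (Suc N)))
    \<and> (\<forall>i. 0 \<le> u i \<and> u i \<le> B) \<and> (\<forall>j. 0 \<le> v j \<and> v j \<le> B)"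
      unfolding B_def by blast
    then show "\<exists>t. feasible_outcome n beta gamma rigidP rigidQ (fst t) (fst (snd t)) (snd (snd t))
    \<and> (\<forall>i<n. \<forall>j<n. in_R rigidP rigidQ i j \<longrightarrow> fst t i \<ge> beta i j \<or> fst (snd t) j \<ge> gamma i j)
    \<and> (\<forall>i<n. \<forall>j<n. in_F rigidP rigidQ i j \<longrightarrow> fst t i + fst (snd t) j \<ge> alpha beta gamma i j - inverse (real (Suc N)))
    \<and> (\<forall>i. 0 \<le> fst t i \<and> fst t i \<le> B) \<and> (\<forall>j. 0 \<le> fst (snd t) j \<and> fst (snd t) j \<le> B)"
      by (intro exI[of _ "(u, v, \<mu>)"]) simp
  qed
  obtain T where T: "\<forall>N. feasible_outcome n beta gamma rigidP rigidQ (fst (T N)) (fst (snd (T N))) (snd (snd (T N)))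
    \<and> (\<forall>i<n. \<forall>j<n. in_R rigidP rigidQ i j \<longrightarrow> fst (T N) i \<ge> beta i j \<or> fst (snd (T N)) j \<ge> gamma i j)
    \<and> (\<forall>i<n. \<forall>j<n. in_F rigidP rigidQ i j \<longrightarrow> fst (T N) i + fst (snd (T N)) j \<ge> alpha beta gamma i j - inverse (real (Suc N)))
    \<and> (\<forall>i. 0 \<le> fst (T N) i \<and> fst (T N) i \<le> B) \<and> (\<forall>j. 0 \<le> fst (snd (T N)) j \<and> fst (snd (T N)) j \<le> B)"
    using choice[OF ex] by blast
  define U where "U = (\<lambda>N. fst (T N))"
  define V where "V = (\<lambda>N. fst (snd (T N)))"
  define M where "M = (\<lambda>N. snd (snd (T N)))"
  have feasN: "feasible_outcome n beta gamma rigidP rigidQ (U N) (V N) (M N)" for N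
    using T unfolding U_def V_def M_def by blast
  have RN: "\<forall>i<n. \<forall>j<n. in_R rigidP rigidQ i j \<longrightarrow> U N i \<ge> beta i j \<or> V N j \<ge> gamma i j" for N
    using T unfolding U_def V_def by blast
  have FN: "\<forall>i<n. \<forall>j<n. in_F rigidP rigidQ i j \<longrightarrow> U N i + V N j \<ge> alpha beta gamma i j - inverse (real (Suc N))" for N
    using T unfolding U_def V_def by blast
  have UB: "0 \<le> U N i \<and> U N i \<le> B" for N i
    using T unfolding U_def by blast
  have VB: "0 \<le> V N i \<and> V N i \<le> B" for N i
    using T unfolding V_def by blast
  have Msub0: "M N \<subseteq> {..<n} \<times> {..<n}" for N
    using feas_parts(1)[OF feasN[of N]] unfolding is_matching_def by (elim conjE)
  have rM: "range M \<subseteq> Pow ({..<n} \<times> {..<n})" using Msub0 by blast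
  have finP: "finite (Pow ({..<n} \<times> {..<n}))" by simp
  have finM: "finite (range M)" using finite_subset[OF rM finP] .
  obtain \<mu>0 where "\<mu>0 \<in> range M" "infinite (M -` {\<mu>0})"
    by (rule inf_img_fin_domE[OF finM infinite_UNIV_nat])
  then obtain r1 :: "nat \<Rightarrow> nat" where r1: "strict_mono r1" "\<forall>k. r1 k \<in> M -` {\<mu>0}" using infinite_enumerate[of "M -` {\<mu>0}"] by blast
  have bU: "\<forall>N i. \<bar>U (r1 N) i\<bar> \<le> B"
  proof (intro allI)
    fix N i show "\<bar>U (r1 N) i\<bar> \<le> B" using UB[of "r1 N" i] by simp
  qed
  have bV: "\<forall>N i. \<bar>V (r1 (r2 N)) i\<bar> \<le> B" for r2
  proof (intro allI)
    fix N i show "\<bar>V (r1 (r2 N)) i\<bar> \<le> B" using VB[of "r1 (r2 N)" i] by simp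
  qed
  obtain r2 where r2: "strict_mono r2" "\<forall>i<n. convergent (\<lambda>N. U (r1 (r2 N)) i)"
    using multi_subseq[OF bU, of n] by auto
  obtain r3 where r3: "strict_mono r3" "\<forall>i<n. convergent (\<lambda>N. V (r1 (r2 (r3 N))) i)"
    using multi_subseq[OF bV[of r2], of n] by auto
  define r where "r = (\<lambda>N. r1 (r2 (r3 N)))"
  have rmono: "strict_mono r" unfolding r_def using r1(1) r2(1) r3(1)
    by (simp add: strict_mono_def)
  have Mr: "M (r N) = \<mu>0" for N using r1(2) unfolding r_def by auto
  define u where "u = (\<lambda>i. lim (\<lambda>N. U (r N) i))"
  define v where "v = (\<lambda>j. lim (\<lambda>N. V (r N) j))"
  have uc: "(\<lambda>N. U (r N) i) \<longlonglongrightarrow> u i" if "i < n" for i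
  proof -
    have "convergent ((\<lambda>N. U (r1 (r2 N)) i) \<circ> r3)"
      using convergent_subseq_convergent[OF r2(2)[rule_format, OF that] r3(1)] .
    then have "convergent (\<lambda>N. U (r N) i)" unfolding r_def o_def .
    then show ?thesis unfolding u_def by (simp add: convergent_LIMSEQ_iff)
  qed
  have vc: "(\<lambda>N. V (r N) j) \<longlonglongrightarrow> v j" if "j < n" for j
    using r3(2) that unfolding v_def r_def by (simp add: convergent_LIMSEQ_iff)
  have feasR: "feasible_outcome n beta gamma rigidP rigidQ (U (r N)) (V (r N)) \<mu>0" for N
    using feasN[of "r N"] Mr[of N] by simp
  have match: "is_matching n \<mu>0" using feas_parts(1)[OF feasR[of 0]] .
  have mu_in: "i < n \<and> j < n" if "(i,j) \<in> \<mu>0" for i j using match that unfolding is_matching_def by auto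
  have unn: "0 \<le> u i" if "i < n" for i
    by (rule LIMSEQ_le_const[OF uc[OF that]]) (use UB VB in auto)
  have vnn: "0 \<le> v i" if "i < n" for i
    by (rule LIMSEQ_le_const[OF vc[OF that]]) (use UB VB in auto)
  have rigP: "u i = beta i j \<and> (\<not> rigidQ j \<longrightarrow> v j \<ge> gamma i j)" if "(i,j) \<in> \<mu>0" "rigidP i" for i j
  proof -
    have ij: "i < n" "j < n" using mu_in that by auto
    have h: "U (r N) i = beta i j \<and> (\<not> rigidQ j \<longrightarrow> V (r N) j \<ge> gamma i j)" for N
      using feas_parts(2)[OF feasR[of N]] that by blast
    have "(\<lambda>N. U (r N) i) = (\<lambda>N. beta i j)" using h by auto
    then have "u i = beta i j" using uc[OF ij(1)] LIMSEQ_unique tendsto_const by metis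
    moreover have "\<not> rigidQ j \<longrightarrow> v j \<ge> gamma i j"
      using LIMSEQ_le_const[OF vc[OF ij(2)]] h by blast
    ultimately show ?thesis by auto
  qed
  have rigQ: "v j = gamma i j \<and> (\<not> rigidP i \<longrightarrow> u i \<ge> beta i j)" if "(i,j) \<in> \<mu>0" "rigidQ j" for i j
  proof -
    have ij: "i < n" "j < n" using mu_in that by auto
    have h: "V (r N) j = gamma i j \<and> (\<not> rigidP i \<longrightarrow> U (r N) i \<ge> beta i j)" for N
      using feas_parts(3)[OF feasR[of N]] that by blast
    have "(\<lambda>N. V (r N) j) = (\<lambda>N. gamma i j)" using h by auto
    then have "v j = gamma i j" using vc[OF ij(2)] LIMSEQ_unique tendsto_const by metis
    moreover have "\<not> rigidP i \<longrightarrow> u i \<ge> beta i j"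
      using LIMSEQ_le_const[OF uc[OF ij(1)]] h by blast
    ultimately show ?thesis by auto
  qed
  have sumeq: "(\<Sum>i<n. u i) + (\<Sum>j<n. v j) = (\<Sum>(i, j) \<in> \<mu>0. alpha beta gamma i j)"
  proof -
    have lim: "(\<lambda>N. (\<Sum>i<n. U (r N) i) + (\<Sum>j<n. V (r N) j)) \<longlonglongrightarrow> (\<Sum>i<n. u i) + (\<Sum>j<n. v j)"
      by (intro tendsto_add tendsto_sum) (auto intro: uc vc)
    have "(\<lambda>N. (\<Sum>i<n. U (r N) i) + (\<Sum>j<n. V (r N) j)) = (\<lambda>N. (\<Sum>(i, j) \<in> \<mu>0. alpha beta gamma i j))"
      using feas_parts(4)[OF feasR] by blast
    with lim show ?thesis using LIMSEQ_unique tendsto_const by metis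
  qed
  have Fst: "u i + v j \<ge> alpha beta gamma i j" if "i < n" "j < n" "in_F rigidP rigidQ i j" for i j
  proof (rule LIMSEQ_le)
    show "(\<lambda>N. alpha beta gamma i j - inverse (real (Suc N))) \<longlonglongrightarrow> alpha beta gamma i j"
      using tendsto_diff[OF tendsto_const LIMSEQ_inverse_real_of_nat] by simp
    show "(\<lambda>N. U (r N) i + V (r N) j) \<longlonglongrightarrow> u i + v j" using uc vc that by (intro tendsto_add) auto
    show "\<exists>N. \<forall>m\<ge>N. alpha beta gamma i j - inverse (real (Suc m)) \<le> U (r m) i + V (r m) j"
    proof (intro exI allI impI)
      fix m :: nat
      have "m \<le> r m" using seq_suble[OF rmono] .
      then have "inverse (real (Suc (r m))) \<le> inverse (real (Suc m))"
        by (simp add: le_imp_inverse_le)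
      moreover have "alpha beta gamma i j - inverse (real (Suc (r m))) \<le> U (r m) i + V (r m) j"
        using FN[of "r m"] that by blast
      ultimately show "alpha beta gamma i j - inverse (real (Suc m)) \<le> U (r m) i + V (r m) j" by linarith
    qed
  qed
  have Rst: "u i \<ge> beta i j \<or> v j \<ge> gamma i j" if "i < n" "j < n" "in_R rigidP rigidQ i j" for i j
  proof (rule ccontr)
    assume "\<not> ?thesis"
    then have "u i < beta i j" "v j < gamma i j" by auto
    then have "eventually (\<lambda>N. U (r N) i < beta i j) sequentially" "eventually (\<lambda>N. V (r N) j < gamma i j) sequentially"
      using order_tendstoD(2)[OF uc[OF that(1)]] order_tendstoD(2)[OF vc[OF that(2)]] by auto
    then have "eventually (\<lambda>N. U (r N) i < beta i j \<and> V (r N) j < gamma i j) sequentially"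
      by (rule eventually_conj)
    then obtain N where "U (r N) i < beta i j" "V (r N) j < gamma i j"
      unfolding eventually_sequentially by auto
    moreover have "U (r N) i \<ge> beta i j \<or> V (r N) j \<ge> gamma i j" using RN[of "r N"] that by blast
    ultimately show False by auto
  qed
  have c1: "\<forall>i<n. u i \<ge> 0" using unn by blast
  have c2: "\<forall>j<n. v j \<ge> 0" using vnn by blast
  have c3: "\<forall>(i, j) \<in> \<mu>0. rigidP i \<longrightarrow> u i = beta i j \<and> (\<not> rigidQ j \<longrightarrow> v j \<ge> gamma i j)"
    using rigP by auto
  have c4: "\<forall>(i, j) \<in> \<mu>0. rigidQ j \<longrightarrow> v j = gamma i j \<and> (\<not> rigidP i \<longrightarrow> u i \<ge> beta i j)"
    using rigQ by auto
  have feas: "feasible_outcome n beta gamma rigidP rigidQ u v \<mu>0"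
    unfolding feasible_outcome_def by (intro conjI match c1 c2 c3 c4 sumeq)
  have c5: "\<forall>i<n. \<forall>j<n. in_F rigidP rigidQ i j \<longrightarrow> u i + v j \<ge> alpha beta gamma i j" using Fst by blast
  have c6: "\<forall>i<n. \<forall>j<n. in_R rigidP rigidQ i j \<longrightarrow> u i \<ge> beta i j \<or> v j \<ge> gamma i j" using Rst by blast
  have "stable_outcome n beta gamma rigidP rigidQ u v \<mu>0"
    unfolding stable_outcome_def by (intro conjI feas c5 c6)
  then show ?thesis by blast
qed

end
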